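(* Let $G$ and $H$ be locally compact second countable groups that are coarsely equivalent. Then there are measurable coarse Lipschitz maps $f\colon G\to H$ and $g\colon H\to G$ such that $f\circ g$ and $g\circ f$ are close to the respective identity maps.
   Context: Metrics on $G$ and $H$ are left-invariant proper continuous metrics (these exist and any two are coarsely equivalent). A map $f\colon (X,d_X)\to(Y,d_Y)$ is coarse Lipschitz if there is a non-decreasing $a\colon[0,\infty)\to[0,\infty)$ with $\lim_{t\to\infty}a(t)=\infty$ and $d_Y(f(x),f(x'))\le a(d_X(x,x'))$ for all $x,x'$. Two maps $f,g\colon X\to Y$ are close if $\sup_{x\in X}d_Y(f(x),g(x))<\infty$. A coarse Lipschitz map $f$ is a coarse equivalence if there is a coarse Lipschitz map $g\colon Y\to X$ with $fg$ and $gf$ close to the identity; $G$ and $H$ are coarsely equivalent if such an $f\colon G\to H$ exists. *)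

theory Defs
  imports "HOL-Analysis.Analysis"
begin

text \<open>Locally compact second countable (Hausdorff) topological groups are modelled by
  types of class topological_group_add (group operation written additively, not assumed
  commutative), t2_space and second_countable_topology, together with local compactness.\<close>

definition lcsc_group :: "'a::{topological_group_add, t2_space, second_countable_topology} itself \<Rightarrow> bool" where
  "lcsc_group _ \<longleftrightarrow> locally_compact_space (euclidean :: 'a topology)"

definition lipc_metric :: "('a::topological_group_add \<Rightarrow> 'a \<Rightarrow> real) \<Rightarrow> bool" where
  "lipc_metric d \<longleftrightarrow>
     Metric_space UNIV d \<and>
     (\<forall>g x y. d (g + x) (g + y) = d x y) \<and>
     (\<forall>x r. compact (closure {y. d x y \<le> r})) \<and>
     continuous_on UNIV (\<lambda>p. d (fst p) (snd p))"

definition coarse_lipschitz :: "('a \<Rightarrow> 'a \<Rightarrow> real) \<Rightarrow> ('b \<Rightarrow> 'b \<Rightarrow> real) \<Rightarrow> ('a \<Rightarrow> 'b) \<Rightarrow> bool" where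
  "coarse_lipschitz dX dY f \<longleftrightarrow>
     (\<exists>a::real \<Rightarrow> real. mono_on {0..} a \<and> (\<forall>t\<ge>0. a t \<ge> 0) \<and> filterlim a at_top at_top \<and>
        (\<forall>x x'. dY (f x) (f x') \<le> a (dX x x')))"

definition close_maps :: "('b \<Rightarrow> 'b \<Rightarrow> real) \<Rightarrow> ('a \<Rightarrow> 'b) \<Rightarrow> ('a \<Rightarrow> 'b) \<Rightarrow> bool" where
  "close_maps dY f g \<longleftrightarrow> (\<exists>C. \<forall>x. dY (f x) (g x) \<le> C)"

definition coarse_equivalence :: "('a \<Rightarrow> 'a \<Rightarrow> real) \<Rightarrow> ('b \<Rightarrow> 'b \<Rightarrow> real) \<Rightarrow> ('a \<Rightarrow> 'b) \<Rightarrow> bool" where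
  "coarse_equivalence dX dY f \<longleftrightarrow> coarse_lipschitz dX dY f \<and>
     (\<exists>g. coarse_lipschitz dY dX g \<and> close_maps dY (f \<circ> g) id \<and> close_maps dX (g \<circ> f) id)"

end

theory Submission
  imports Defs
begin

lemma measurable_approx:
  fixes dX :: "'a::{topological_group_add, second_countable_topology} \<Rightarrow> 'a \<Rightarrow> real"
    and dY :: "'b::topological_space \<Rightarrow> 'b \<Rightarrow> real"
  assumes dX: "lipc_metric dX" and dY: "Metric_space UNIV dY"
    and f: "coarse_lipschitz dX dY f"
  shows "\<exists>f' C. f' \<in> borel_measurable borel \<and> C \<ge> 0 \<and> (\<forall>x. dY (f' x) (f x) \<le> C)"
proof -
  obtain D :: "'a set" where D: "countable D" "\<And>U. open U \<Longrightarrow> U \<noteq> {} \<Longrightarrow> \<exists>y \<in> D. y \<in> U"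
    using countable_dense_exists by blast
  have Dne: "D \<noteq> {}" using D(2)[of UNIV] by auto
  define xs where "xs = from_nat_into D"
  have rng: "range xs = D" unfolding xs_def using D(1) Dne by (simp add: range_from_nat_into)
  interpret X: Metric_space UNIV dX using dX unfolding lipc_metric_def by auto
  interpret Y: Metric_space UNIV dY by (rule dY)
  have cont: "continuous_on UNIV (\<lambda>p. dX (fst p) (snd p))" using dX unfolding lipc_metric_def by auto
  have c1: "continuous_on UNIV (\<lambda>y. dX y x)" for x
    using continuous_on_compose[OF continuous_on_Pair[OF continuous_on_id continuous_on_const[of UNIV x]], of "\<lambda>p. dX (fst p) (snd p)"] cont
    by (auto simp: o_def continuous_on_subset)
  have c2: "continuous_on UNIV (\<lambda>y. dX x y)" for x
    using continuous_on_compose[OF continuous_on_Pair[OF continuous_on_const[of UNIV x] continuous_on_id], of "\<lambda>p. dX (fst p) (snd p)"] cont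
    by (auto simp: o_def continuous_on_subset)
  have ex: "\<exists>n. dX (xs n) x < 1" for x
  proof -
    have "open {y. dX y x < 1}" using open_Collect_less[OF c1 continuous_on_const] by simp
    moreover have "x \<in> {y. dX y x < 1}" by simp
    ultimately obtain y where "y \<in> D" "dX y x < 1" using D(2) by blast
    then show ?thesis using rng by auto
  qed
  define N where "N x = (LEAST n. dX (xs n) x < 1)" for x
  have Nlt: "dX (xs (N x)) x < 1" for x unfolding N_def using ex by (rule LeastI_ex)
  have Nm: "N \<in> measurable borel (count_space UNIV)"
    unfolding N_def
  proof (rule measurable_Least)
    fix i
    have "open {x. dX (xs i) x < 1}" using open_Collect_less[OF c2 continuous_on_const] by simp
    then have "{x. dX (xs i) x < 1} \<in> sets borel" by auto
    then show "(\<lambda>x. dX (xs i) x < 1) \<in> measurable borel (count_space UNIV)"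
      by (simp add: pred_def)
  qed
  obtain a where a: "mono_on {0..} a" "\<And>t. t \<ge> 0 \<Longrightarrow> a t \<ge> 0" "\<And>x x'. dY (f x) (f x') \<le> a (dX x x')"
    using f unfolding coarse_lipschitz_def by blast
  define f' where "f' x = f (xs (N x))" for x
  have "f' \<in> borel_measurable borel"
    unfolding f'_def using measurable_compose[OF Nm, of "\<lambda>n. f (xs n)" borel] by (simp add: o_def)
  moreover have "dY (f' x) (f x) \<le> a 1" for x
  proof -
    have "dY (f' x) (f x) \<le> a (dX (xs (N x)) x)" unfolding f'_def by (rule a(3))
    also have "\<dots> \<le> a 1" using a(1) Nlt[of x] by (intro mono_onD[OF a(1)]) auto
    finally show ?thesis .
  qed
  moreover have "a 1 \<ge> 0" using a(2) by simp
  ultimately show ?thesis by blast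
qed


lemma cl_add:
  assumes "coarse_lipschitz dX dY f" and "C \<ge> 0" and "\<And>x y. dY (h x) (h y) \<le> dY (f x) (f y) + C"
  shows "coarse_lipschitz dX dY h"
proof -
  obtain a where a: "mono_on {0..} a" "\<And>t. t \<ge> 0 \<Longrightarrow> a t \<ge> 0" "filterlim a at_top at_top"
    "\<And>x x'. dY (f x) (f x') \<le> a (dX x x')"
    using assms(1) unfolding coarse_lipschitz_def by blast
  have "mono_on {0..} (\<lambda>t. C + a t)" using a(1) by (auto simp: mono_on_def)
  moreover have "filterlim (\<lambda>t. C + a t) at_top at_top"
    by (rule filterlim_tendsto_add_at_top[OF tendsto_const a(3)])
  moreover have "dY (h x) (h x') \<le> C + a (dX x x')" for x x'
    using assms(3)[of x x'] a(4)[of x x'] by linarith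
  ultimately show ?thesis unfolding coarse_lipschitz_def using a(2) assms(2)
    by (intro exI[of _ "\<lambda>t. C + a t"]) (auto intro: add_nonneg_nonneg)
qed

theorem lemma4p1:
  fixes dG :: "'g::{topological_group_add, t2_space, second_countable_topology} \<Rightarrow> 'g \<Rightarrow> real"
    and dH :: "'h::{topological_group_add, t2_space, second_countable_topology} \<Rightarrow> 'h \<Rightarrow> real"
  assumes "lcsc_group TYPE('g)" and "lcsc_group TYPE('h)"
    and "lipc_metric dG" and "lipc_metric dH"
    and "\<exists>f. coarse_equivalence dG dH f"
  shows "\<exists>f g. f \<in> borel_measurable borel \<and> g \<in> borel_measurable borel \<and>
    coarse_lipschitz dG dH f \<and> coarse_lipschitz dH dG g \<and>
    close_maps dH (f \<circ> g) id \<and> close_maps dG (g \<circ> f) id"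
proof -
  interpret G: Metric_space UNIV dG using assms(3) unfolding lipc_metric_def by auto
  interpret H: Metric_space UNIV dH using assms(4) unfolding lipc_metric_def by auto
  obtain f g where f: "coarse_lipschitz dG dH f" and g: "coarse_lipschitz dH dG g"
    and fg: "close_maps dH (f \<circ> g) id" and gf: "close_maps dG (g \<circ> f) id"
    using assms(5) unfolding coarse_equivalence_def by blast
  obtain K1 where K1: "\<And>y. dH (f (g y)) y \<le> K1" using fg unfolding close_maps_def by auto
  obtain K2 where K2: "\<And>x. dG (g (f x)) x \<le> K2" using gf unfolding close_maps_def by auto
  obtain f' C1 where f': "f' \<in> borel_measurable borel" "C1 \<ge> 0" "\<And>x. dH (f' x) (f x) \<le> C1"
    using measurable_approx[OF assms(3) H.Metric_space_axioms f] by blast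
  obtain g' C2 where g': "g' \<in> borel_measurable borel" "C2 \<ge> 0" "\<And>x. dG (g' x) (g x) \<le> C2"
    using measurable_approx[OF assms(4) G.Metric_space_axioms g] by blast
  obtain a where a: "mono_on {0..} a" "\<And>x x'. dH (f x) (f x') \<le> a (dG x x')"
    using f unfolding coarse_lipschitz_def by blast
  obtain b where b: "mono_on {0..} b" "\<And>x x'. dG (g x) (g x') \<le> b (dH x x')"
    using g unfolding coarse_lipschitz_def by blast
  have "coarse_lipschitz dG dH f'"
  proof (rule cl_add[OF f, of "2*C1"])
    fix x y
    have "dH (f' x) (f' y) \<le> dH (f' x) (f x) + dH (f x) (f y) + dH (f y) (f' y)"
      by (metis H.triangle UNIV_I add_le_cancel_right order_trans)
    also have "\<dots> \<le> dH (f x) (f y) + 2*C1" using f'(3)[of x] f'(3)[of y] H.commute[of "f y" "f' y"] by linarith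
    finally show "dH (f' x) (f' y) \<le> dH (f x) (f y) + 2*C1" .
  qed (use f' in auto)
  moreover have "coarse_lipschitz dH dG g'"
  proof (rule cl_add[OF g, of "2*C2"])
    fix x y
    have "dG (g' x) (g' y) \<le> dG (g' x) (g x) + dG (g x) (g y) + dG (g y) (g' y)"
      by (metis G.triangle UNIV_I add_le_cancel_right order_trans)
    also have "\<dots> \<le> dG (g x) (g y) + 2*C2" using g'(3)[of x] g'(3)[of y] G.commute[of "g y" "g' y"] by linarith
    finally show "dG (g' x) (g' y) \<le> dG (g x) (g y) + 2*C2" .
  qed (use g' in auto)
  moreover have "close_maps dH (f' \<circ> g') id"
    unfolding close_maps_def
  proof (intro exI allI)
    fix y
    have "dH (f' (g' y)) y \<le> dH (f' (g' y)) (f (g' y)) + dH (f (g' y)) (f (g y)) + dH (f (g y)) y"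
      by (metis H.triangle UNIV_I add_le_cancel_right order_trans)
    moreover have "dH (f (g' y)) (f (g y)) \<le> a C2"
      using a(2)[of "g' y" "g y"] mono_onD[OF a(1), of "dG (g' y) (g y)" C2] g'(2) g'(3)[of y] by auto
    ultimately show "dH ((f' \<circ> g') y) (id y) \<le> C1 + a C2 + K1" using f'(3)[of "g' y"] K1[of y] by simp
  qed
  moreover have "close_maps dG (g' \<circ> f') id"
    unfolding close_maps_def
  proof (intro exI allI)
    fix y
    have "dG (g' (f' y)) y \<le> dG (g' (f' y)) (g (f' y)) + dG (g (f' y)) (g (f y)) + dG (g (f y)) y"
      by (metis G.triangle UNIV_I add_le_cancel_right order_trans)
    moreover have "dG (g (f' y)) (g (f y)) \<le> b C1"
      using b(2)[of "f' y" "f y"] mono_onD[OF b(1), of "dH (f' y) (f y)" C1] f'(2) f'(3)[of y] by auto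
    ultimately show "dG ((g' \<circ> f') y) (id y) \<le> C2 + b C1 + K2" using g'(3)[of "f' y"] K2[of y] by simp
  qed
  ultimately show ?thesis using f'(1) g'(1) by blast
qed

end
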